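(* Let $\mathbb{F}\in\{\mathbb{R},\mathbb{C}\}$ and let $\Phi=\{\varphi_i\}_{i=1}^M\subseteq\mathbb{F}^N$ satisfy $\|\varphi_i\|=\sqrt{N/M}$ for every $i\in[M]$. Let $N\le k\le M$. Then $$CV_k(\Phi)\leq\sqrt{{M\choose k}{M-N\choose M-k}},$$ with equality if and only if $\Phi$ is a Parseval frame (i.e. $\Phi\Phi^*=I$) and $cv_k(\Phi_K)=\sqrt{{M\choose k}^{-1}{M-N\choose M-k}}$ for every $K\subseteq[M]$ with $|K|=k$.
   Context: $\Phi$ also denotes the $N\times M$ matrix with columns $\varphi_i$. For $K\subseteq[M]$, $\Phi_K$ is the submatrix of columns indexed by $K$. For an $N\times k$ matrix $F$ with $k\ge N$, $cv_k(F)=\sqrt{\det(FF^* )}$, and $CV_k(\Phi)=\sum_{|K|=k}cv_k(\Phi_K)$. *)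

theory Defs
  imports Complex_Main "Jordan_Normal_Form.Determinant" "Jordan_Normal_Form.Schur_Decomposition"
    "Jordan_Normal_Form.DL_Submatrix"
begin

text \<open>Frames are N x M matrices over F (real or complex); column i (i < M) is the
  frame vector phi_i.  Conjugate transpose is mat_adjoint.\<close>

definition vnorm :: "'a :: real_normed_field vec \<Rightarrow> real" where
  "vnorm v = sqrt (\<Sum>j<dim_vec v. (norm (v $ j))^2)"

definition cols_sub :: "'a mat \<Rightarrow> nat set \<Rightarrow> 'a mat" where
  "cols_sub A K = submatrix A {..<dim_row A} K"

text \<open>cv_k(F) = sqrt(det(F F^*)); det(F F^*) is a nonnegative real number,
  so we take its absolute value to land in the reals.\<close>
definition cv :: "'a :: {conjugatable_field, real_normed_field} mat \<Rightarrow> real" where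
  "cv F = sqrt (norm (det (F * mat_adjoint F)))"

definition CV :: "nat \<Rightarrow> 'a :: {conjugatable_field, real_normed_field} mat \<Rightarrow> real" where
  "CV k A = (\<Sum>K\<in>{K. K \<subseteq> {..<dim_col A} \<and> card K = k}. cv (cols_sub A K))"

end

theory Submission
  imports Defs
begin

lemma pick_inj: assumes "finite J" shows "inj_on (pick J) {..<card J}"
proof (rule inj_onI)
  fix x y assume x: "x \<in> {..<card J}" and y: "y \<in> {..<card J}" and e: "pick J x = pick J y"
  show "x = y"
  proof (rule ccontr)
    assume "x \<noteq> y"
    then have "x < y \<or> y < x" by auto
    then show False using pick_mono_le[of y J x] pick_mono_le[of x J y] x y e by auto
  qed
qed

lemma pick_image: assumes "finite J" shows "pick J ` {..<card J} = J"
proof -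
  have sub: "pick J ` {..<card J} \<subseteq> J" using pick_in_set_le by auto
  have "card (pick J ` {..<card J}) = card J" using card_image[OF pick_inj[OF assms]] by simp
  then show ?thesis using card_subset_eq[OF assms sub] by simp
qed

lemma pick_bij: assumes "finite J" shows "bij_betw (pick J) {..<card J} J"
  using pick_inj[OF assms] pick_image[OF assms] by (simp add: bij_betw_def)

lemma pick_card_inv: assumes "finite (J::nat set)" "x \<in> J" shows "card {a\<in>J. a < x} < card J"
proof -
  have "{a\<in>J. a < x} \<subseteq> J" by auto
  moreover have "x \<notin> {a\<in>J. a < x}" by auto
  ultimately have "{a\<in>J. a < x} \<subset> J" using assms(2) by blast
  then show ?thesis using psubset_card_mono assms by blast
qed

lemma cauchy_binet_gen:
  fixes a b :: "nat \<Rightarrow> nat \<Rightarrow> 'a::comm_ring_1"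
  assumes K: "finite K"
  shows "det (mat n n (\<lambda>(r,s). \<Sum>i\<in>K. a r i * b s i)) =
    (\<Sum>J\<in>{J. J \<subseteq> K \<and> card J = n}. det (mat n n (\<lambda>(r,s). a r (pick J s))) *
        det (mat n n (\<lambda>(r,s). b s (pick J r))))"
proof -
  let ?U = "{0..<n}"
  let ?P = "{p. p permutes ?U}"
  let ?F = "PiE ?U (\<lambda>_. K)"
  let ?D = "\<lambda>f. det (mat n n (\<lambda>(r,s). b s (f r)))"
  let ?g = "\<lambda>f. (\<Prod>r\<in>?U. a r (f r)) * ?D f"
  have finP: "finite ?P" by (simp add: finite_permutations)
  have finF: "finite ?F" using K by (simp add: finite_PiE)
  have "det (mat n n (\<lambda>(r,s). \<Sum>i\<in>K. a r i * b s i)) =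
     (\<Sum>p\<in>?P. signof p * (\<Prod>r\<in>?U. \<Sum>i\<in>K. a r i * b (p r) i))"
    unfolding det_def'[OF mat_carrier]
    by (intro sum.cong refl arg_cong[where f="\<lambda>x. _ * x"] prod.cong, auto simp: permutes_in_image)
  also have "\<dots> = (\<Sum>p\<in>?P. signof p * (\<Sum>f\<in>?F. \<Prod>r\<in>?U. a r (f r) * b (p r) (f r)))"
    by (subst prod_sum_PiE, use K in auto)
  also have "\<dots> = (\<Sum>f\<in>?F. (\<Prod>r\<in>?U. a r (f r)) * (\<Sum>p\<in>?P. signof p * (\<Prod>r\<in>?U. b (p r) (f r))))"
    by (simp add: sum_distrib_left prod.distrib sum.swap[of _ ?P] algebra_simps)
  also have "\<dots> = (\<Sum>f\<in>?F. ?g f)"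
  proof (rule sum.cong[OF refl])
    fix f assume "f \<in> ?F"
    have "?D f = (\<Sum>p\<in>?P. signof p * (\<Prod>r\<in>?U. b (p r) (f r)))"
      unfolding det_def'[OF mat_carrier]
      by (intro sum.cong refl arg_cong[where f="\<lambda>x. _ * x"] prod.cong, auto simp: permutes_in_image)
    then show "(\<Prod>r\<in>?U. a r (f r)) * (\<Sum>p\<in>?P. signof p * (\<Prod>r\<in>?U. b (p r) (f r))) = ?g f"
      by simp
  qed
  also have "\<dots> = (\<Sum>f\<in>{f\<in>?F. inj_on f ?U}. ?g f)"
  proof (rule sum.mono_neutral_right[OF finF])
    show "{f\<in>?F. inj_on f ?U} \<subseteq> ?F" by auto
    show "\<forall>f\<in>?F - {f\<in>?F. inj_on f ?U}. ?g f = 0"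
    proof
      fix f assume "f \<in> ?F - {f\<in>?F. inj_on f ?U}"
      then obtain i j where ij: "i \<in> ?U" "j \<in> ?U" "i \<noteq> j" "f i = f j" unfolding inj_on_def by auto
      have "?D f = 0"
        by (rule det_identical_rows[OF mat_carrier ij(3)], use ij in auto)
      then show "?g f = 0" by simp
    qed
  qed
  also have "\<dots> = (\<Sum>(J,q)\<in>Sigma {J. J \<subseteq> K \<and> card J = n} (\<lambda>_. ?P). ?g (restrict (\<lambda>r. pick J (q r)) ?U))"
  proof -
    define jj where "jj = (\<lambda>f::nat\<Rightarrow>nat. (f ` ?U, \<lambda>r. if r < n then card {x\<in>f ` ?U. x < f r} else r))"
    define ii where "ii = (\<lambda>(J,q). restrict (\<lambda>r. pick J ((q::nat\<Rightarrow>nat) r)) ?U)"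
    have ij: "ii (jj f) = f" if f: "f \<in> {f\<in>?F. inj_on f ?U}" for f
    proof
      let ?J = "f ` ?U"
      fix r show "ii (jj f) r = f r"
        using f pick_card_in_set[of "f r" ?J] by (auto simp: PiE_def extensional_def ii_def jj_def)
    qed
    show ?thesis
    proof (rule sum.reindex_bij_witness[where j = jj and i = ii])
      fix f assume f: "f \<in> {f\<in>?F. inj_on f ?U}"
      show "ii (jj f) = f" using ij[OF f] .
      have "(\<lambda>(J,q). ?g (restrict (\<lambda>r. pick J (q r)) ?U)) (jj f) = ?g (ii (jj f))"
        by (simp add: ii_def jj_def)
      then show "(\<lambda>(J,q). ?g (restrict (\<lambda>r. pick J (q r)) ?U)) (jj f) = ?g f" using ij[OF f] by simp
      let ?J = "f ` ?U"
      have cJ: "card ?J = n" using f card_image by fastforce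
      have fJ: "finite ?J" by simp
      let ?q = "\<lambda>r. if r < n then card {x\<in>f ` ?U. x < f r} else r"
      have "?q permutes ?U"
      proof (rule inj_on_nat_permutes)
        show "inj_on ?q ?U"
        proof (rule inj_onI)
          fix x y assume x: "x \<in> ?U" and y: "y \<in> ?U" and e: "?q x = ?q y"
          then have "pick ?J (?q x) = pick ?J (?q y)" by simp
          then have "f x = f y" using x y pick_card_in_set[of "f x" ?J] pick_card_in_set[of "f y" ?J] by auto
          then show "x = y" using f x y unfolding inj_on_def by auto
        qed
        show "?q \<in> ?U \<rightarrow> ?U" using pick_card_inv[OF fJ] cJ by auto
      qed auto
      then show "jj f \<in> Sigma {J. J \<subseteq> K \<and> card J = n} (\<lambda>_. ?P)"
        using f cJ by (auto simp: PiE_def jj_def)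
    next
      fix Jq assume Jq: "Jq \<in> Sigma {J. J \<subseteq> K \<and> card J = n} (\<lambda>_. ?P)"
      obtain J q where Jq_def: "Jq = (J,q)" by force
      have J: "J \<subseteq> K" "card J = n" and q: "q permutes ?U" using Jq Jq_def by auto
      have fJ: "finite J" using J K finite_subset by auto
      have qU: "q ` ?U = ?U" using q by (simp add: permutes_image)
      have img: "(restrict (\<lambda>r. pick J (q r)) ?U) ` ?U = J"
      proof -
        have "(restrict (\<lambda>r. pick J (q r)) ?U) ` ?U = pick J ` (q ` ?U)" by (auto simp: image_iff)
        also have "\<dots> = J" using qU pick_image[OF fJ] J by (auto simp: lessThan_atLeast0)
        finally show ?thesis .
      qed
      have qlt: "r < n \<Longrightarrow> q r < n" for r using q permutes_in_image[OF q] by auto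
      show "jj (ii Jq) = Jq"
        unfolding Jq_def jj_def ii_def using img card_pick_le[of _ J] qlt J permutes_not_in[OF q]
        by (auto intro!: ext)
      show "ii Jq \<in> {f\<in>?F. inj_on f ?U}"
      proof -
        have "inj_on (\<lambda>r. pick J (q r)) ?U"
          using comp_inj_on[of q ?U "pick J"] permutes_inj_on[OF q] pick_inj[OF fJ] qU J
          by (simp add: o_def lessThan_atLeast0)
        then show ?thesis unfolding Jq_def ii_def using J qlt pick_in_set_le[of _ J]
          by (auto simp: inj_on_def)
      qed
    qed
  qed
  also have "\<dots> = (\<Sum>J\<in>{J. J \<subseteq> K \<and> card J = n}. \<Sum>q\<in>?P. ?g (restrict (\<lambda>r. pick J (q r)) ?U))"
  proof (rule sum.Sigma[symmetric])
    show "finite {J. J \<subseteq> K \<and> card J = n}" using K by (auto intro: finite_subset[of _ "Pow K"])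
  qed (use finP in auto)
  also have "\<dots> = (\<Sum>J\<in>{J. J \<subseteq> K \<and> card J = n}. det (mat n n (\<lambda>(r,s). a r (pick J s))) *
        det (mat n n (\<lambda>(r,s). b s (pick J r))))"
  proof (rule sum.cong[OF refl])
    fix J
    let ?B = "mat n n (\<lambda>(r,s). b s (pick J r))"
    have "(\<Sum>q\<in>?P. ?g (restrict (\<lambda>r. pick J (q r)) ?U)) =
        (\<Sum>q\<in>?P. (signof q * (\<Prod>r\<in>?U. a r (pick J (q r)))) * det ?B)"
    proof (rule sum.cong[OF refl])
      fix q assume q: "q \<in> ?P"
      have qlt: "r < n \<Longrightarrow> q r < n" for r using q permutes_in_image[of q ?U] by auto
      have "?D (restrict (\<lambda>r. pick J (q r)) ?U) = det (mat n n (\<lambda>(i,j). ?B $$ (q i, j)))"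
        by (rule arg_cong[where f=det], rule eq_matI, use qlt in auto)
      also have "\<dots> = signof q * det ?B" using det_permute_rows[OF mat_carrier, of q] q by simp
      finally have "?D (restrict (\<lambda>r. pick J (q r)) ?U) = signof q * det ?B" .
      moreover have "(\<Prod>r\<in>?U. a r (restrict (\<lambda>r. pick J (q r)) ?U r)) = (\<Prod>r\<in>?U. a r (pick J (q r)))"
        by (rule prod.cong, auto)
      ultimately show "?g (restrict (\<lambda>r. pick J (q r)) ?U) = (signof q * (\<Prod>r\<in>?U. a r (pick J (q r)))) * det ?B"
        by (simp add: ac_simps)
    qed
    also have "\<dots> = det (mat n n (\<lambda>(r,s). a r (pick J s))) * det ?B"
      unfolding det_def'[OF mat_carrier] sum_distrib_right
      by (intro sum.cong refl arg_cong[where f="\<lambda>x. x * _"] arg_cong[where f="\<lambda>x. _ * x"] prod.cong,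
          auto simp: permutes_in_image)
    finally show "(\<Sum>q\<in>?P. ?g (restrict (\<lambda>r. pick J (q r)) ?U)) = det (mat n n (\<lambda>(r,s). a r (pick J s))) * det ?B" .
  qed
  finally show ?thesis .
qed

lemma adj_carrier: "A \<in> carrier_mat n m \<Longrightarrow> mat_adjoint A \<in> carrier_mat m n"
  unfolding mat_adjoint_def carrier_mat_def by simp

lemma adj_index: "A \<in> carrier_mat n m \<Longrightarrow> i < m \<Longrightarrow> j < n \<Longrightarrow>
   mat_adjoint A $$ (i,j) = conjugate (A $$ (j,i))"
  unfolding mat_adjoint_def carrier_mat_def by (simp add: mat_of_rows_index)

lemma mult_index_sum:
  assumes A: "A \<in> carrier_mat n m" and B: "B \<in> carrier_mat m k" and i: "i < n" and j: "j < k"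
  shows "(A * B) $$ (i,j) = (\<Sum>l<m. A $$ (i,l) * B $$ (l,j))"
proof -
  have "(A * B) $$ (i,j) = row A i \<bullet> col B j" using A B i j by simp
  also have "\<dots> = (\<Sum>l\<in>{0..<m}. row A i $ l * col B j $ l)" unfolding scalar_prod_def using B by simp
  also have "\<dots> = (\<Sum>l<m. A $$ (i,l) * B $$ (l,j))" unfolding lessThan_atLeast0
    by (rule sum.cong[OF refl], use A B i j in simp)
  finally show ?thesis .
qed

lemma adj_mult:
  fixes A B :: "complex mat"
  assumes A: "A \<in> carrier_mat n m" and B: "B \<in> carrier_mat m k"
  shows "mat_adjoint (A * B) = mat_adjoint B * mat_adjoint A"
proof (rule eq_matI)
  have AB: "A * B \<in> carrier_mat n k" using A B by simp
  have aA: "mat_adjoint A \<in> carrier_mat m n" and aB: "mat_adjoint B \<in> carrier_mat k m"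
    using adj_carrier[OF A] adj_carrier[OF B] .
  have aAB: "mat_adjoint (A * B) \<in> carrier_mat k n" using adj_carrier[OF AB] .
  show "dim_row (mat_adjoint (A * B)) = dim_row (mat_adjoint B * mat_adjoint A)"
    using aAB aB by simp
  show "dim_col (mat_adjoint (A * B)) = dim_col (mat_adjoint B * mat_adjoint A)"
    using aAB aA by simp
  fix i j assume i: "i < dim_row (mat_adjoint B * mat_adjoint A)" and j: "j < dim_col (mat_adjoint B * mat_adjoint A)"
  then have i: "i < k" and j: "j < n" using aA aB by auto
  have "mat_adjoint (A * B) $$ (i,j) = cnj ((A * B) $$ (j,i))" using adj_index[OF AB i j] by simp
  also have "\<dots> = cnj (\<Sum>l<m. A $$ (j,l) * B $$ (l,i))"
    using mult_index_sum[OF A B j i] by simp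
  also have "\<dots> = (\<Sum>l<m. mat_adjoint B $$ (i,l) * mat_adjoint A $$ (l,j))"
    unfolding cnj_sum by (rule sum.cong[OF refl], use adj_index[OF A] adj_index[OF B] i j in simp)
  also have "\<dots> = (mat_adjoint B * mat_adjoint A) $$ (i,j)"
    using mult_index_sum[OF aB aA i j] by simp
  finally show "mat_adjoint (A * B) $$ (i,j) = (mat_adjoint B * mat_adjoint A) $$ (i,j)" .
qed

interpretation cnj_hom: comm_ring_hom cnj
  by (unfold_locales, auto)

lemma det_adj:
  fixes A :: "complex mat"
  assumes A: "A \<in> carrier_mat n n"
  shows "det (mat_adjoint A) = cnj (det A)"
proof -
  have aA: "mat_adjoint A \<in> carrier_mat n n" using adj_carrier[OF A] .
  have "mat_adjoint A = transpose_mat (map_mat cnj A)"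
  proof (rule eq_matI)
    fix i j assume "i < dim_row (transpose_mat (map_mat cnj A))" "j < dim_col (transpose_mat (map_mat cnj A))"
    then have i: "i < n" and j: "j < n" using A by auto
    show "mat_adjoint A $$ (i, j) = transpose_mat (map_mat cnj A) $$ (i, j)"
      using adj_index[OF A i j] A i j by simp
  qed (use A aA in simp_all)
  then have "det (mat_adjoint A) = det (map_mat cnj A)"
    using det_transpose[of "map_mat cnj A" n] A by simp
  also have "\<dots> = cnj (det A)"
    by (rule cnj_hom.hom_det)
  finally show ?thesis .
qed

definition gram :: "complex mat \<Rightarrow> complex mat" where
  "gram A = A * mat_adjoint A"

lemma gram_index:
  assumes A: "A \<in> carrier_mat n m" and r: "r < n" and s: "s < n"
  shows "gram A $$ (r,s) = (\<Sum>l<m. A $$ (r,l) * cnj (A $$ (s,l)))"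
  unfolding gram_def mult_index_sum[OF A adj_carrier[OF A] r s]
  by (rule sum.cong[OF refl], use adj_index[OF A] s in simp)

lemma gram_carrier: "A \<in> carrier_mat n m \<Longrightarrow> gram A \<in> carrier_mat n n"
  unfolding gram_def by (metis adj_carrier mult_carrier_mat)

lemma gram_elim:
  assumes A: "A \<in> carrier_mat n m" and E: "E \<in> carrier_mat n n" and dE: "det E = 1"
  shows "det (gram (E * A)) = det (gram A)"
proof -
  have aA: "mat_adjoint A \<in> carrier_mat m n" and aE: "mat_adjoint E \<in> carrier_mat n n"
    using adj_carrier[OF A] adj_carrier[OF E] .
  have AA: "A * mat_adjoint A \<in> carrier_mat n n" using A aA by simp
  have "gram (E * A) = E * A * (mat_adjoint A * mat_adjoint E)"
    unfolding gram_def adj_mult[OF E A] ..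
  also have "\<dots> = E * (A * (mat_adjoint A * mat_adjoint E))"
    using assoc_mult_mat[OF E A, of _ n] aA aE by simp
  also have "A * (mat_adjoint A * mat_adjoint E) = (A * mat_adjoint A) * mat_adjoint E"
    using assoc_mult_mat[OF A aA aE] by simp
  also have "E * \<dots> = E * (A * mat_adjoint A) * mat_adjoint E"
    using assoc_mult_mat[OF E AA aE] by simp
  also have "det \<dots> = det E * det (A * mat_adjoint A) * det (mat_adjoint E)"
    using E AA aE det_mult[of "E * (A * mat_adjoint A)" n "mat_adjoint E"] det_mult[OF E AA] by simp
  also have "\<dots> = det (gram A)" using det_adj[OF E] dE by (simp add: gram_def)
  finally show ?thesis .
qed

lemma elim_norm:
  fixes x v :: "nat \<Rightarrow> complex" and m :: nat
  assumes p: "p = (\<Sum>l<m. (cmod (v l))^2)" and s: "s = (\<Sum>l<m. x l * cnj (v l))" and pos: "p > 0"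
  shows "(\<Sum>l<m. (cmod (x l - (s / of_real p) * v l))^2) = (\<Sum>l<m. (cmod (x l))^2) - (cmod s)^2 / p"
    and "(\<Sum>l<m. v l * cnj (x l - (s / of_real p) * v l)) = 0"
proof -
  define c where "c = s / of_real p"
  define X where "X = (\<Sum>l<m. x l * cnj (x l))"
  have P: "complex_of_real p = (\<Sum>l<m. v l * cnj (v l))"
    unfolding p of_real_sum complex_norm_square ..
  have cs: "(\<Sum>l<m. v l * cnj (x l)) = cnj s" unfolding s cnj_sum by (simp add: mult.commute)
  have cc: "cnj c = cnj s / of_real p" unfolding c_def by simp
  have pne: "complex_of_real p \<noteq> 0" using pos by simp
  have "complex_of_real (\<Sum>l<m. (cmod (x l - c * v l))^2) = (\<Sum>l<m. (x l - c * v l) * cnj (x l - c * v l))"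
    unfolding of_real_sum complex_norm_square ..
  also have "\<dots> = (\<Sum>l<m. x l * cnj (x l) - cnj c * (x l * cnj (v l)) - c * (v l * cnj (x l)) + c * cnj c * (v l * cnj (v l)))"
    by (rule sum.cong[OF refl], simp add: algebra_simps)
  also have "\<dots> = X - cnj c * s - c * cnj s + c * cnj c * of_real p"
    unfolding X_def P s cs[symmetric] by (simp add: sum.distrib sum_subtractf sum_distrib_left ac_simps)
  also have "\<dots> = X - s * cnj s / of_real p"
    unfolding cc unfolding c_def using pne by (simp add: field_simps)
  also have "\<dots> = complex_of_real ((\<Sum>l<m. (cmod (x l))^2) - (cmod s)^2 / p)"
    unfolding X_def of_real_diff of_real_divide of_real_sum complex_norm_square ..
  finally show "(\<Sum>l<m. (cmod (x l - (s / of_real p) * v l))^2) = (\<Sum>l<m. (cmod (x l))^2) - (cmod s)^2 / p"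
    unfolding c_def of_real_eq_iff .
  have "(\<Sum>l<m. v l * cnj (x l - c * v l)) = (\<Sum>l<m. v l * cnj (x l) - cnj c * (v l * cnj (v l)))"
    by (rule sum.cong[OF refl], simp add: algebra_simps)
  also have "\<dots> = cnj s - cnj c * of_real p"
    unfolding P cs[symmetric] by (simp add: sum_subtractf sum_distrib_left)
  also have "\<dots> = 0" unfolding cc using pne by simp
  finally show "(\<Sum>l<m. v l * cnj (x l - (s / of_real p) * v l)) = 0" unfolding c_def .
qed

definition rn :: "complex mat \<Rightarrow> nat \<Rightarrow> real" where
  "rn A r = (\<Sum>l<dim_col A. (cmod (A $$ (r,l)))^2)"

lemma rn_nonneg: "rn A r \<ge> 0" unfolding rn_def by (simp add: sum_nonneg)

lemma hadamard:
  "A \<in> carrier_mat n m \<Longrightarrow> cmod (det (gram A)) \<le> (\<Prod>r<n. rn A r)"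
proof (induction n arbitrary: A)
  case 0
  then have "gram A \<in> carrier_mat 0 0" using gram_carrier by blast
  then show ?case by simp
next
  case (Suc n)
  have A: "A \<in> carrier_mat (Suc n) m" by fact
  have G: "gram A \<in> carrier_mat (Suc n) (Suc n)" using gram_carrier[OF A] .
  define p where "p = rn A 0"
  have p_def': "p = (\<Sum>l<m. (cmod (A $$ (0,l)))^2)" unfolding p_def rn_def using A by simp
  have nn: "0 \<le> (\<Prod>r<Suc n. rn A r)" by (rule prod_nonneg, simp add: rn_nonneg)
  show ?case
  proof (cases "p = 0")
    case True
    then have z: "A $$ (0,l) = 0" if "l < m" for l
      using that p_def' sum_nonneg_eq_0_iff[of "{..<m}" "\<lambda>l. (cmod (A $$ (0,l)))^2"] by auto
    have "det (gram A) = (\<Sum>j<Suc n. gram A $$ (0,j) * cofactor (gram A) 0 j)"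
      using laplace_expansion_row[OF G, of 0] by simp
    also have "\<dots> = 0"
      by (rule sum.neutral, use gram_index[OF A] z in simp)
    finally show ?thesis using nn by simp
  next
    case False
    then have pos: "p > 0" using p_def rn_nonneg[of A 0] by simp
    define c where "c i = (\<Sum>l<m. A $$ (i,l) * cnj (A $$ (0,l))) / of_real p" for i
    define E where "E = mat (Suc n) (Suc n) (\<lambda>(i,j). if i = j then 1 else if j = 0 then - c i else (0::complex))"
    define A' where "A' = mat (Suc n) m (\<lambda>(i,l). if i = 0 then A $$ (0,l) else A $$ (i,l) - c i * A $$ (0,l))"
    have E: "E \<in> carrier_mat (Suc n) (Suc n)" unfolding E_def by simp
    have A': "A' \<in> carrier_mat (Suc n) m" unfolding A'_def by simp
    have EA: "E * A = A'"
    proof (rule eq_matI)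
      fix i l assume i: "i < dim_row A'" and l: "l < dim_col A'"
      then have i: "i < Suc n" and l: "l < m" using A' by auto
      have "(E * A) $$ (i,l) = (\<Sum>j<Suc n. E $$ (i,j) * A $$ (j,l))" using mult_index_sum[OF E A i l] .
      also have "\<dots> = (\<Sum>j<Suc n. (if j = i then A $$ (i,l) else 0) + (if j = 0 then (if i = 0 then 0 else - c i * A $$ (0,l)) else 0))"
        by (rule sum.cong[OF refl], use i in \<open>auto simp: E_def\<close>)
      also have "\<dots> = A' $$ (i,l)"
        unfolding sum.distrib using i l by (simp add: A'_def)
      finally show "(E * A) $$ (i,l) = A' $$ (i,l)" .
    qed (use A A' E in auto)
    have dE: "det E = 1"
    proof -
      have "det E = prod_list (diag_mat E)"
        by (rule det_lower_triangular[OF _ E], auto simp: E_def)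
      also have "diag_mat E = map (\<lambda>i. 1) [0..<Suc n]"
        unfolding diag_mat_def using E by (auto simp: E_def)
      also have "prod_list (map (\<lambda>i. 1::complex) [0..<Suc n]) = 1"
        by (induction n, auto)
      finally show ?thesis .
    qed
    have detG: "det (gram A') = det (gram A)" using gram_elim[OF A E dE] EA by simp
    let ?G = "gram A'"
    have G': "?G \<in> carrier_mat (Suc n) (Suc n)" using gram_carrier[OF A'] .
    have row0: "?G $$ (0,j) = 0" if j: "0 < j" "j < Suc n" for j
    proof -
      have "?G $$ (0,j) = (\<Sum>l<m. A' $$ (0,l) * cnj (A' $$ (j,l)))"
        using gram_index[OF A', of 0 j] j by simp
      also have "\<dots> = (\<Sum>l<m. A $$ (0,l) * cnj (A $$ (j,l) - c j * A $$ (0,l)))"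
        by (rule sum.cong[OF refl], use j in \<open>simp add: A'_def\<close>)
      also have "\<dots> = 0" unfolding c_def
        by (rule elim_norm(2)[OF p_def' refl pos])
      finally show ?thesis .
    qed
    have G00: "?G $$ (0,0) = of_real p"
      unfolding gram_index[OF A' zero_less_Suc zero_less_Suc] p_def' of_real_sum complex_norm_square
      by (rule sum.cong[OF refl], simp add: A'_def)
    define B where "B = mat n m (\<lambda>(i,l). A' $$ (Suc i, l))"
    have B: "B \<in> carrier_mat n m" unfolding B_def by simp
    have del: "mat_delete ?G 0 0 = gram B"
    proof (rule eq_matI)
      fix i j assume "i < dim_row (gram B)" "j < dim_col (gram B)"
      then have i: "i < n" and j: "j < n" using gram_carrier[OF B] by auto
      have "mat_delete ?G 0 0 $$ (i,j) = ?G $$ (Suc i, Suc j)"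
        unfolding mat_delete_def using G' i j by simp
      also have "\<dots> = gram B $$ (i,j)"
        unfolding gram_index[OF A' Suc_mono[OF i] Suc_mono[OF j]] gram_index[OF B i j] using i j
        by (intro sum.cong refl, simp add: B_def)
      finally show "mat_delete ?G 0 0 $$ (i,j) = gram B $$ (i,j)" .
    qed (use G' gram_carrier[OF B] in auto)
    have "det ?G = (\<Sum>j<Suc n. ?G $$ (0,j) * cofactor ?G 0 j)"
      using laplace_expansion_row[OF G', of 0] by simp
    also have "\<dots> = ?G $$ (0,0) * cofactor ?G 0 0"
      unfolding sum.lessThan_Suc_shift using row0 by simp
    also have "\<dots> = of_real p * det (gram B)"
      unfolding G00 cofactor_def del by simp
    finally have dG: "det (gram A) = of_real p * det (gram B)" using detG by simp
    have rnB: "rn B r \<le> rn A (Suc r)" if r: "r < n" for r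
    proof -
      have "rn B r = (\<Sum>l<m. (cmod (A $$ (Suc r,l) - c (Suc r) * A $$ (0,l)))^2)"
        unfolding rn_def using B r by (intro sum.cong, auto simp: B_def A'_def)
      also have "\<dots> = (\<Sum>l<m. (cmod (A $$ (Suc r,l)))^2) - (cmod (\<Sum>l<m. A $$ (Suc r,l) * cnj (A $$ (0,l))))^2 / p"
        unfolding c_def by (rule elim_norm(1)[OF p_def' refl pos])
      also have "\<dots> \<le> rn A (Suc r)" unfolding rn_def using A pos by simp
      finally show ?thesis .
    qed
    have "cmod (det (gram A)) = p * cmod (det (gram B))" unfolding dG norm_mult using pos by simp
    also have "\<dots> \<le> p * (\<Prod>r<n. rn B r)"
      using Suc.IH[OF B] pos by simp
    also have "\<dots> \<le> p * (\<Prod>r<n. rn A (Suc r))"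
      using pos rnB rn_nonneg by (intro mult_left_mono prod_mono, auto)
    also have "\<dots> = (\<Prod>r<Suc n. rn A r)" unfolding prod.lessThan_Suc_shift p_def by simp
    finally show ?thesis .
  qed
qed

lemma exp_strict: fixes y :: real assumes "y \<noteq> 0" shows "1 + y < exp y"
proof (cases "1 + y / 2 \<ge> 0")
  case True
  have "(1 + y/2)^2 \<le> (exp (y/2))^2"
    using True exp_ge_add_one_self[of "y/2"] by (intro power_mono, auto)
  also have "(exp (y/2))^2 = exp y" by (simp add: power2_eq_square flip: exp_add)
  finally have "(1 + y/2)^2 \<le> exp y" .
  moreover have "(1 + y/2)^2 = 1 + y + y^2/4" by (simp add: power2_eq_square field_simps)
  moreover have "y^2/4 > 0" using assms by simp
  ultimately show ?thesis by linarith
next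
  case False
  then have "1 + y < 0" by simp
  also have "0 < exp y" by simp
  finally show ?thesis .
qed

lemma le_exp_m1: fixes x :: real shows "x \<le> exp (x - 1)"
  using exp_ge_add_one_self[of "x - 1"] by simp

lemma amgm_exp:
  fixes x :: "nat \<Rightarrow> real"
  assumes nn: "\<And>r. r < n \<Longrightarrow> x r \<ge> 0" and s: "(\<Sum>r<n. x r) = n"
  shows "(\<Prod>r<n. x r) \<le> 1" and "(\<Prod>r<n. x r) \<ge> 1 \<Longrightarrow> r < n \<Longrightarrow> x r = 1"
proof -
  have e0: "(\<Prod>r<n. exp (x r - 1)) = exp (\<Sum>r<n. x r - 1)" by (simp add: exp_sum)
  have "(\<Sum>r<n. x r - 1) = 0" using s by (simp add: sum_subtractf)
  then have e: "(\<Prod>r<n. exp (x r - 1)) = 1" using e0 by simp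
  have le: "(\<Prod>r<n. x r) \<le> (\<Prod>r<n. exp (x r - 1))"
    by (rule prod_mono, use nn le_exp_m1 in auto)
  then show "(\<Prod>r<n. x r) \<le> 1" using e by simp
  assume ge: "(\<Prod>r<n. x r) \<ge> 1" and r: "r < n"
  show "x r = 1"
  proof (rule ccontr)
    assume "x r \<noteq> 1"
    then have "x r < exp (x r - 1)" using exp_strict[of "x r - 1"] by simp
    then have "(\<Prod>r<n. x r) < (\<Prod>r<n. exp (x r - 1))"
      by (intro prod_mono_strict[of r], use r nn le_exp_m1 in auto)
    then show False using e ge by simp
  qed
qed

lemma gram_offdiag_zero:
  assumes A: "A \<in> carrier_mat n m" and one: "\<And>r. r < n \<Longrightarrow> rn A r = 1"
    and ge: "cmod (det (gram A)) \<ge> 1" and a: "a < n" and b: "b < n" and ab: "a \<noteq> b"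
  shows "gram A $$ (b,a) = 0"
proof (rule ccontr)
  define s where "s = (\<Sum>l<m. A $$ (b,l) * cnj (A $$ (a,l)))"
  assume "gram A $$ (b,a) \<noteq> 0"
  then have s0: "s \<noteq> 0" unfolding s_def using gram_index[OF A b a] by simp
  have pa: "rn A a = (\<Sum>l<m. (cmod (A $$ (a,l)))^2)" unfolding rn_def using A by simp
  have pos: "rn A a > 0" using one[OF a] by simp
  define E where "E = addrow_mat n (- (s / of_real (rn A a))) b a"
  define A' where "A' = E * A"
  have E: "E \<in> carrier_mat n n" unfolding E_def by simp
  have dE: "det E = 1" unfolding E_def using det_addrow_mat[OF ab[symmetric]] .
  have A'': "A' = addrow (- (s / of_real (rn A a))) b a A" unfolding A'_def E_def
    using addrow_mat[OF A a] by simp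
  have A': "A' \<in> carrier_mat n m" unfolding A'_def using E A by simp
  have dG: "det (gram A') = det (gram A)" unfolding A'_def using gram_elim[OF A E dE] .
  have rn_other: "rn A' r = 1" if r: "r < n" "r \<noteq> b" for r
    unfolding rn_def using A A' r one[OF r(1)] by (auto simp: A'' rn_def intro!: sum.cong)
  have "rn A' b = (\<Sum>l<m. (cmod (A' $$ (b,l)))^2)" using A' by (simp add: rn_def)
  also have "\<dots> = (\<Sum>l<m. (cmod (A $$ (b,l) - (s / of_real (rn A a)) * A $$ (a,l)))^2)"
    by (rule sum.cong[OF refl], use A b in \<open>simp add: A''\<close>)
  also have "\<dots> = (\<Sum>l<m. (cmod (A $$ (b,l)))^2) - (cmod s)^2 / rn A a"
    by (rule elim_norm(1)[OF pa s_def pos])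
  also have "\<dots> = 1 - (cmod s)^2" using one[OF a] one[OF b] A unfolding rn_def by simp
  finally have rb: "rn A' b < 1" using s0 by simp
  have "(\<Prod>r<n. rn A' r) = rn A' b * (\<Prod>r\<in>{..<n} - {b}. rn A' r)"
    using prod.remove[of "{..<n}" b] b by simp
  also have "(\<Prod>r\<in>{..<n} - {b}. rn A' r) = 1"
    by (rule prod.neutral, use rn_other in auto)
  finally have "(\<Prod>r<n. rn A' r) < 1" using rb by simp
  moreover have "cmod (det (gram A')) \<le> (\<Prod>r<n. rn A' r)" using hadamard[OF A'] .
  ultimately show False using dG ge by simp
qed

lemma gram_bound:
  assumes A: "A \<in> carrier_mat n m" and s: "(\<Sum>r<n. rn A r) = n"
  shows "cmod (det (gram A)) \<le> 1"
    and "cmod (det (gram A)) \<ge> 1 \<Longrightarrow> gram A = 1\<^sub>m n"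
proof -
  note am = amgm_exp[of n "rn A", OF rn_nonneg s]
  show "cmod (det (gram A)) \<le> 1" using hadamard[OF A] am(1) by simp
  assume ge: "cmod (det (gram A)) \<ge> 1"
  have one: "rn A r = 1" if "r < n" for r
    using am(2)[OF _ that] hadamard[OF A] ge by simp
  show "gram A = 1\<^sub>m n"
  proof (rule eq_matI)
    fix i j assume "i < dim_row (1\<^sub>m n)" "j < dim_col (1\<^sub>m n)"
    then have i: "i < n" and j: "j < n" by auto
    show "gram A $$ (i,j) = 1\<^sub>m n $$ (i,j)"
    proof (cases "i = j")
      case True
      have "gram A $$ (i,i) = of_real (rn A i)"
        unfolding gram_index[OF A i i] rn_def of_real_sum complex_norm_square using A by simp
      then show ?thesis using True one[OF i] i by simp
    next
      case False
      then show ?thesis using gram_offdiag_zero[OF A one ge j i] i j by simp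
    qed
  qed (use gram_carrier[OF A] in auto)
qed

lemma pick_lessThan: "i < N \<Longrightarrow> pick {..<N} i = i"
proof -
  assume i: "i < N"
  have "{a. a < N \<and> a \<in> (UNIV::nat set)} = {..<N}" by auto
  moreover have "card {a. a < N \<and> a \<in> (UNIV::nat set)} = N" by simp
  ultimately show ?thesis using pick_reduce_set[of i N UNIV] i pick_UNIV by simp
qed

lemma cols_sub_eq:
  fixes A :: "'a mat"
  assumes A: "A \<in> carrier_mat N M" and K: "K \<subseteq> {..<M}"
  shows "cols_sub A K = mat N (card K) (\<lambda>(i,j). A $$ (i, pick K j))"
proof -
  have c1: "card {i. i < dim_row A \<and> i \<in> {..<N}} = N" using A by simp
  have "{j. j < dim_col A \<and> j \<in> K} = K" using A K by auto
  then have c2: "card {j. j < dim_col A \<and> j \<in> K} = card K" by simp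
  show ?thesis unfolding cols_sub_def submatrix_def c1 c2
    using carrier_matD[OF A] by (intro eq_matI, auto simp: pick_lessThan)
qed

lemma cols_sub_carrier:
  assumes A: "A \<in> carrier_mat N M" and K: "K \<subseteq> {..<M}"
  shows "cols_sub A K \<in> carrier_mat N (card K)"
  unfolding cols_sub_eq[OF A K] by simp

lemma gram_cols_sub:
  assumes A: "A \<in> carrier_mat N M" and K: "K \<subseteq> {..<M}"
  shows "gram (cols_sub A K) = mat N N (\<lambda>(r,s). \<Sum>i\<in>K. A $$ (r,i) * cnj (A $$ (s,i)))"
proof (rule eq_matI)
  have C: "cols_sub A K \<in> carrier_mat N (card K)" using cols_sub_carrier[OF A K] .
  have fK: "finite K" using K finite_subset by blast
  fix r s assume "r < dim_row (mat N N (\<lambda>(r,s). \<Sum>i\<in>K. A $$ (r,i) * cnj (A $$ (s,i))))"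
    "s < dim_col (mat N N (\<lambda>(r,s). \<Sum>i\<in>K. A $$ (r,i) * cnj (A $$ (s,i))))"
  then have r: "r < N" and s: "s < N" by auto
  have "gram (cols_sub A K) $$ (r,s) = (\<Sum>l<card K. cols_sub A K $$ (r,l) * cnj (cols_sub A K $$ (s,l)))"
    using gram_index[OF C r s] .
  also have "\<dots> = (\<Sum>l<card K. A $$ (r, pick K l) * cnj (A $$ (s, pick K l)))"
    by (rule sum.cong[OF refl], use r s in \<open>simp add: cols_sub_eq[OF A K]\<close>)
  also have "\<dots> = (\<Sum>i\<in>K. A $$ (r,i) * cnj (A $$ (s,i)))"
    using sum.reindex_bij_betw[OF pick_bij[OF fK], of "\<lambda>i. A $$ (r,i) * cnj (A $$ (s,i))"] by simp
  finally show "gram (cols_sub A K) $$ (r,s) = mat N N (\<lambda>(r,s). \<Sum>i\<in>K. A $$ (r,i) * cnj (A $$ (s,i))) $$ (r,s)"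
    using r s by simp
qed (use gram_carrier[OF cols_sub_carrier[OF A K]] in auto)

lemma gram_full:
  assumes A: "A \<in> carrier_mat N M"
  shows "gram A = mat N N (\<lambda>(r,s). \<Sum>i\<in>{..<M}. A $$ (r,i) * cnj (A $$ (s,i)))"
  by (rule eq_matI, use gram_index[OF A] gram_carrier[OF A] in auto)

lemma det_gram_cols_sub:
  assumes A: "A \<in> carrier_mat N M" and K: "K \<subseteq> {..<M}"
  shows "det (gram (cols_sub A K)) = of_real (\<Sum>J\<in>{J. J \<subseteq> K \<and> card J = N}. (cmod (det (cols_sub A J)))^2)"
proof -
  have fK: "finite K" using K finite_subset by blast
  have "det (gram (cols_sub A K)) = (\<Sum>J\<in>{J. J \<subseteq> K \<and> card J = N}. det (mat N N (\<lambda>(r,s). A $$ (r, pick J s))) *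
        det (mat N N (\<lambda>(r,s). cnj (A $$ (s, pick J r)))))"
    unfolding gram_cols_sub[OF A K] by (rule cauchy_binet_gen[OF fK])
  also have "\<dots> = (\<Sum>J\<in>{J. J \<subseteq> K \<and> card J = N}. of_real ((cmod (det (cols_sub A J)))^2))"
  proof (rule sum.cong[OF refl])
    fix J assume J: "J \<in> {J. J \<subseteq> K \<and> card J = N}"
    then have JM: "J \<subseteq> {..<M}" and cJ: "card J = N" using K by auto
    have e1: "mat N N (\<lambda>(r,s). A $$ (r, pick J s)) = cols_sub A J"
      unfolding cols_sub_eq[OF A JM] cJ ..
    have C: "cols_sub A J \<in> carrier_mat N N" using cols_sub_carrier[OF A JM] cJ by simp
    have e2: "mat N N (\<lambda>(r,s). cnj (A $$ (s, pick J r))) = mat_adjoint (cols_sub A J)"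
      by (rule eq_matI, use adj_index[OF C] adj_carrier[OF C] in \<open>auto simp: cols_sub_eq[OF A JM] cJ\<close>)
    show "det (mat N N (\<lambda>(r,s). A $$ (r, pick J s))) * det (mat N N (\<lambda>(r,s). cnj (A $$ (s, pick J r)))) =
        of_real ((cmod (det (cols_sub A J)))^2)"
      unfolding e1 e2 det_adj[OF C] complex_norm_square ..
  qed
  also have "\<dots> = of_real (\<Sum>J\<in>{J. J \<subseteq> K \<and> card J = N}. (cmod (det (cols_sub A J)))^2)"
    by (simp add: of_real_sum)
  finally show ?thesis .
qed

lemma det_gram_full:
  assumes A: "A \<in> carrier_mat N M"
  shows "det (gram A) = of_real (\<Sum>J\<in>{J. J \<subseteq> {..<M} \<and> card J = N}. (cmod (det (cols_sub A J)))^2)"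
proof -
  have "gram A = gram (cols_sub A {..<M})"
    unfolding gram_full[OF A] gram_cols_sub[OF A subset_refl] ..
  then show ?thesis using det_gram_cols_sub[OF A subset_refl] by simp
qed

lemma comb_sum:
  fixes h :: "nat set \<Rightarrow> real"
  assumes Nk: "N \<le> k"
  shows "(\<Sum>K\<in>{K. K \<subseteq> {..<M} \<and> card K = k}. \<Sum>J\<in>{J. J \<subseteq> K \<and> card J = N}. h J) =
    real ((M - N) choose (k - N)) * (\<Sum>J\<in>{J. J \<subseteq> {..<M} \<and> card J = N}. h J)"
proof -
  let ?Ks = "{K. K \<subseteq> {..<M} \<and> card K = k}"
  let ?Js = "{J. J \<subseteq> {..<M} \<and> card J = N}"
  have fKs: "finite ?Ks" by (rule finite_subset[of _ "Pow {..<M}"], auto)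
  have fJs: "finite ?Js" by (rule finite_subset[of _ "Pow {..<M}"], auto)
  have "(\<Sum>K\<in>?Ks. \<Sum>J\<in>{J. J \<subseteq> K \<and> card J = N}. h J) = (\<Sum>K\<in>?Ks. \<Sum>J\<in>{J\<in>?Js. J \<subseteq> K}. h J)"
    by (rule sum.cong[OF refl], rule sum.cong, auto)
  also have "\<dots> = (\<Sum>J\<in>?Js. \<Sum>K | K \<in> ?Ks \<and> J \<subseteq> K. h J)"
    by (rule sum.swap_restrict[OF fKs fJs])
  also have "\<dots> = (\<Sum>J\<in>?Js. real ((M - N) choose (k - N)) * h J)"
  proof (rule sum.cong[OF refl])
    fix J assume J: "J \<in> ?Js"
    then have JM: "J \<subseteq> {..<M}" and cJ: "card J = N" by auto
    have fJ: "finite J" using JM finite_subset by blast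
    let ?L = "{L. L \<subseteq> {..<M} - J \<and> card L = k - N}"
    have img: "{K. K \<in> ?Ks \<and> J \<subseteq> K} = (\<lambda>L. L \<union> J) ` ?L"
    proof
      show "{K. K \<in> ?Ks \<and> J \<subseteq> K} \<subseteq> (\<lambda>L. L \<union> J) ` ?L"
      proof
        fix K assume K: "K \<in> {K. K \<in> ?Ks \<and> J \<subseteq> K}"
        then have KM: "K \<subseteq> {..<M}" and cK: "card K = k" and JK: "J \<subseteq> K" by auto
        have fK: "finite K" using KM finite_subset by blast
        have "card (K - J) = k - N" using card_Diff_subset[OF fJ JK] cK cJ by simp
        then have "K - J \<in> ?L" using KM by auto
        moreover have "K = (K - J) \<union> J" using JK by auto
        ultimately show "K \<in> (\<lambda>L. L \<union> J) ` ?L" by blast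
      qed
      show "(\<lambda>L. L \<union> J) ` ?L \<subseteq> {K. K \<in> ?Ks \<and> J \<subseteq> K}"
      proof
        fix K assume "K \<in> (\<lambda>L. L \<union> J) ` ?L"
        then obtain L where L: "L \<subseteq> {..<M} - J" "card L = k - N" and KL: "K = L \<union> J" by auto
        have fL: "finite L" using L(1) finite_subset by blast
        have "card K = card L + card J" unfolding KL using card_Un_disjoint[OF fL fJ] L(1) by auto
        then show "K \<in> {K. K \<in> ?Ks \<and> J \<subseteq> K}" using L KL JM cJ Nk by auto
      qed
    qed
    have inj: "inj_on (\<lambda>L. L \<union> J) ?L"
    proof (rule inj_onI)
      fix L1 L2 assume "L1 \<in> ?L" "L2 \<in> ?L" "L1 \<union> J = L2 \<union> J"
      then show "L1 = L2" by blast
    qed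
    have "card {K. K \<in> ?Ks \<and> J \<subseteq> K} = card ?L" unfolding img using card_image[OF inj] .
    also have "\<dots> = card ({..<M} - J) choose (k - N)" by (rule n_subsets, simp)
    also have "card ({..<M} - J) = M - N" using card_Diff_subset[OF fJ JM] cJ by simp
    finally have "card {K. K \<in> ?Ks \<and> J \<subseteq> K} = (M - N) choose (k - N)" .
    then show "(\<Sum>K | K \<in> ?Ks \<and> J \<subseteq> K. h J) = real ((M - N) choose (k - N)) * h J" by simp
  qed
  also have "\<dots> = real ((M - N) choose (k - N)) * (\<Sum>J\<in>?Js. h J)" by (simp add: sum_distrib_left)
  finally show ?thesis .
qed

lemma cs_sum:
  fixes x :: "'b \<Rightarrow> real"
  assumes S: "finite S" and ne: "S \<noteq> {}"
  shows "(\<Sum>K\<in>S. x K)^2 \<le> real (card S) * (\<Sum>K\<in>S. (x K)^2)"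
    and "(\<Sum>K\<in>S. x K)^2 = real (card S) * (\<Sum>K\<in>S. (x K)^2) \<Longrightarrow> K \<in> S \<Longrightarrow> x K = (\<Sum>K\<in>S. x K) / real (card S)"
proof -
  define c where "c = real (card S)"
  define t where "t = (\<Sum>K\<in>S. x K)"
  define q where "q = (\<Sum>K\<in>S. (x K)^2)"
  define mu where "mu = t / c"
  have c: "c > 0" unfolding c_def using S ne by (simp add: card_gt_0_iff)
  have "(\<Sum>K\<in>S. (x K - mu)^2) = (\<Sum>K\<in>S. (x K)^2 - 2 * mu * x K + mu^2)"
  proof (rule sum.cong[OF refl])
    fix K show "(x K - mu)^2 = (x K)^2 - 2 * mu * x K + mu^2"
      unfolding power2_diff by (simp only: mult.commute[of mu] mult.assoc)
  qed
  also have "\<dots> = q - 2 * mu * t + c * mu^2"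
    unfolding q_def t_def c_def by (simp add: sum.distrib sum_subtractf sum_distrib_left)
  also have "\<dots> = q - t^2 / c"
  proof -
    have a: "c * mu^2 = t^2 / c" unfolding mu_def using c by (simp add: power2_eq_square)
    have b: "2 * mu * t = 2 * (t^2 / c)" unfolding mu_def by (simp add: power2_eq_square)
    show ?thesis unfolding a b by simp
  qed
  finally have eq: "(\<Sum>K\<in>S. (x K - mu)^2) = q - t^2 / c" .
  have "0 \<le> (\<Sum>K\<in>S. (x K - mu)^2)" by (simp add: sum_nonneg)
  then have "t^2 / c \<le> q" using eq by simp
  then have "t^2 \<le> c * q" using c by (simp add: pos_divide_le_eq mult.commute)
  then show "(\<Sum>K\<in>S. x K)^2 \<le> real (card S) * (\<Sum>K\<in>S. (x K)^2)"
    unfolding t_def q_def c_def .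
  assume e: "(\<Sum>K\<in>S. x K)^2 = real (card S) * (\<Sum>K\<in>S. (x K)^2)" and K: "K \<in> S"
  have "t^2 = c * q" using e unfolding t_def q_def c_def .
  then have "t^2 / c = q" using c by simp
  then have "(\<Sum>K\<in>S. (x K - mu)^2) = 0" using eq by simp
  then have "(x K - mu)^2 = 0" using sum_nonneg_eq_0_iff[OF S, of "\<lambda>K. (x K - mu)^2"] K by simp
  then show "x K = (\<Sum>K\<in>S. x K) / real (card S)" unfolding mu_def t_def c_def by simp
qed


lemma cv_eq:
  assumes A: "A \<in> carrier_mat N M" and K: "K \<subseteq> {..<M}"
  shows "cv (cols_sub A K) = sqrt (\<Sum>J\<in>{J. J \<subseteq> K \<and> card J = N}. (cmod (det (cols_sub A J)))^2)"
proof -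
  have "cv (cols_sub A K) = sqrt (cmod (det (gram (cols_sub A K))))" unfolding cv_def gram_def ..
  also have "cmod (det (gram (cols_sub A K))) = (\<Sum>J\<in>{J. J \<subseteq> K \<and> card J = N}. (cmod (det (cols_sub A J)))^2)"
    unfolding det_gram_cols_sub[OF A K] norm_of_real by (simp add: sum_nonneg)
  finally show ?thesis .
qed

lemma rn_sum:
  fixes A :: "complex mat"
  assumes A: "A \<in> carrier_mat N M" and nrm: "\<forall>i<M. vnorm (col A i) = sqrt (real N / real M)"
    and NM: "N \<le> M"
  shows "(\<Sum>r<N. rn A r) = N"
proof (cases "M = 0")
  case True then show ?thesis using NM by simp
next
  case False
  have "(\<Sum>r<N. rn A r) = (\<Sum>r<N. \<Sum>l<M. (cmod (A $$ (r,l)))^2)" unfolding rn_def using A by simp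
  also have "\<dots> = (\<Sum>l<M. \<Sum>r<N. (cmod (A $$ (r,l)))^2)" by (rule sum.swap)
  also have "\<dots> = (\<Sum>l<M. real N / real M)"
  proof (rule sum.cong[OF refl])
    fix l assume l: "l \<in> {..<M}"
    have "vnorm (col A l) = sqrt (\<Sum>r<N. (cmod (A $$ (r,l)))^2)"
      unfolding vnorm_def using A l by (simp add: )
    then have "sqrt (\<Sum>r<N. (cmod (A $$ (r,l)))^2) = sqrt (real N / real M)" using nrm l by simp
    then show "(\<Sum>r<N. (cmod (A $$ (r,l)))^2) = real N / real M" by simp
  qed
  also have "\<dots> = N" using False by simp
  finally show ?thesis .
qed

lemma main_complex:
  fixes \<Phi> :: "complex mat"
  assumes \<Phi>: "\<Phi> \<in> carrier_mat N M" and nrm: "\<forall>i<M. vnorm (col \<Phi> i) = sqrt (real N / real M)"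
    and Nk: "N \<le> k" and kM: "k \<le> M"
  shows "CV k \<Phi> \<le> sqrt (real (M choose k) * real ((M - N) choose (M - k))) \<and>
      (CV k \<Phi> = sqrt (real (M choose k) * real ((M - N) choose (M - k))) \<longleftrightarrow>
         \<Phi> * mat_adjoint \<Phi> = 1\<^sub>m N \<and>
         (\<forall>K. K \<subseteq> {..<M} \<and> card K = k \<longrightarrow>
            cv (cols_sub \<Phi> K) = sqrt (inverse (real (M choose k)) * real ((M - N) choose (M - k)))))"
proof -
  let ?Ks = "{K. K \<subseteq> {..<M} \<and> card K = k}"
  let ?Js = "{J. J \<subseteq> {..<M} \<and> card J = N}"
  define n where "n = real (M choose k)"
  define C where "C = real ((M - N) choose (M - k))"
  define x where "x K = cv (cols_sub \<Phi> K)" for K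
  define dj where "dj J = (cmod (det (cols_sub \<Phi> J)))^2" for J
  define D where "D = cmod (det (gram \<Phi>))"
  have fKs: "finite ?Ks" by (rule finite_subset[of _ "Pow {..<M}"], auto)
  have cKs: "card ?Ks = M choose k" using n_subsets[of "{..<M}" k] by simp
  have n: "n > 0" unfolding n_def using kM by simp
  have CC: "(M - N) choose (k - N) = (M - N) choose (M - k)"
    using binomial_symmetric[of "k - N" "M - N"] Nk kM by simp
  have C: "C > 0" unfolding C_def using Nk kM by simp
  have "{..<k} \<in> ?Ks" using kM by auto
  then have neKs: "?Ks \<noteq> {}" by blast
  have CVx: "CV k \<Phi> = (\<Sum>K\<in>?Ks. x K)" unfolding CV_def x_def using \<Phi> by simp
  have x2: "(x K)^2 = (\<Sum>J\<in>{J. J \<subseteq> K \<and> card J = N}. dj J)" if "K \<in> ?Ks" for K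
    using cv_eq[OF \<Phi>, of K] that by (simp add: x_def dj_def sum_nonneg)
  have xnn: "x K \<ge> 0" for K unfolding x_def cv_def by simp
  have Q: "(\<Sum>K\<in>?Ks. (x K)^2) = C * D"
  proof -
    have "(\<Sum>K\<in>?Ks. (x K)^2) = (\<Sum>K\<in>?Ks. \<Sum>J\<in>{J. J \<subseteq> K \<and> card J = N}. dj J)"
      by (rule sum.cong[OF refl], rule x2)
    also have "\<dots> = C * (\<Sum>J\<in>?Js. dj J)" using comb_sum[OF Nk, where M=M and h=dj] CC unfolding C_def by simp
    also have "(\<Sum>J\<in>?Js. dj J) = D" unfolding D_def det_gram_full[OF \<Phi>] dj_def norm_of_real
      by (simp add: sum_nonneg)
    finally show ?thesis .
  qed
  have rs: "(\<Sum>r<N. rn \<Phi> r) = N" using rn_sum[OF \<Phi> nrm] Nk kM by simp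
  have D1: "D \<le> 1" unfolding D_def using gram_bound(1)[OF \<Phi> rs] .
  have D0: "D \<ge> 0" unfolding D_def by simp
  define S where "S = (\<Sum>K\<in>?Ks. x K)"
  have S0: "S \<ge> 0" unfolding S_def using xnn by (simp add: sum_nonneg)
  have S2: "S^2 \<le> n * (C * D)" using cs_sum(1)[OF fKs neKs, of x] cKs Q unfolding S_def n_def by simp
  have nCD: "n * (C * D) \<le> n * C" using D1 n C by (simp add: mult_left_mono)
  have bound: "S \<le> sqrt (n * C)"
  proof -
    have "S = sqrt (S^2)" using S0 by simp
    also have "\<dots> \<le> sqrt (n * C)" using S2 nCD by (intro real_sqrt_le_mono) linarith
    finally show ?thesis .
  qed
  have sq: "sqrt (n * C) / n = sqrt (inverse n * C)"
  proof -
    have "sqrt (n * C) / n = sqrt (n * C) / sqrt (n^2)" using n by simp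
    also have "\<dots> = sqrt (n * C / n^2)" by (simp add: real_sqrt_divide)
    also have "n * C / n^2 = inverse n * C" using n by (simp add: power2_eq_square field_simps)
    finally show ?thesis .
  qed
  have eqv: "S = sqrt (n * C) \<longleftrightarrow> \<Phi> * mat_adjoint \<Phi> = 1\<^sub>m N \<and> (\<forall>K. K \<subseteq> {..<M} \<and> card K = k \<longrightarrow> x K = sqrt (inverse n * C))"
  proof
    assume e: "S = sqrt (n * C)"
    then have Sq: "S^2 = n * C" using n C by simp
    then have "n * C \<le> n * (C * D)" using S2 by simp
    then have "C \<le> C * D" using n by simp
    then have "D \<ge> 1" using C by simp
    then have "gram \<Phi> = 1\<^sub>m N" using gram_bound(2)[OF \<Phi> rs] unfolding D_def by simp
    moreover have "x K = sqrt (inverse n * C)" if K: "K \<subseteq> {..<M} \<and> card K = k" for K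
    proof -
      have "S^2 = real (card ?Ks) * (\<Sum>K\<in>?Ks. (x K)^2)"
        using Sq S2 nCD cKs Q unfolding n_def by simp
      then have "x K = S / real (card ?Ks)" using cs_sum(2)[OF fKs neKs, of x K] K unfolding S_def by simp
      then show ?thesis using e sq cKs unfolding n_def by simp
    qed
    ultimately show "\<Phi> * mat_adjoint \<Phi> = 1\<^sub>m N \<and> (\<forall>K. K \<subseteq> {..<M} \<and> card K = k \<longrightarrow> x K = sqrt (inverse n * C))"
      unfolding gram_def by blast
  next
    assume "\<Phi> * mat_adjoint \<Phi> = 1\<^sub>m N \<and> (\<forall>K. K \<subseteq> {..<M} \<and> card K = k \<longrightarrow> x K = sqrt (inverse n * C))"
    then have xs: "K \<in> ?Ks \<Longrightarrow> x K = sqrt (inverse n * C)" for K by blast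
    have "S = (\<Sum>K\<in>?Ks. sqrt (inverse n * C))" unfolding S_def by (rule sum.cong[OF refl], rule xs)
    also have "\<dots> = n * sqrt (inverse n * C)" using cKs unfolding n_def by simp
    also have "\<dots> = n * (sqrt (n * C) / n)" unfolding sq ..
    also have "\<dots> = sqrt (n * C)" using n by simp
    finally show "S = sqrt (n * C)" .
  qed
  have CVS: "CV k \<Phi> = S" unfolding CVx S_def ..
  show ?thesis using bound eqv unfolding CVS n_def C_def x_def by blast
qed

lemma real_transfer:
  fixes \<Phi> :: "real mat"
  assumes \<Phi>: "\<Phi> \<in> carrier_mat N M"
  defines "\<Psi> \<equiv> map_mat complex_of_real \<Phi>"
  shows "\<Psi> \<in> carrier_mat N M"
    and "i < M \<Longrightarrow> vnorm (col \<Psi> i) = vnorm (col \<Phi> i)"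
    and "K \<subseteq> {..<M} \<Longrightarrow> cv (cols_sub \<Psi> K) = cv (cols_sub \<Phi> K)"
    and "CV k \<Psi> = CV k \<Phi>"
    and "\<Psi> * mat_adjoint \<Psi> = 1\<^sub>m N \<longleftrightarrow> \<Phi> * mat_adjoint \<Phi> = 1\<^sub>m N"
proof -
  show P: "\<Psi> \<in> carrier_mat N M" unfolding \<Psi>_def using \<Phi> by simp
  show "vnorm (col \<Psi> i) = vnorm (col \<Phi> i)" if i: "i < M"
  proof -
    have "col \<Psi> i = map_vec complex_of_real (col \<Phi> i)" unfolding \<Psi>_def using \<Phi> i by simp
    then show ?thesis unfolding vnorm_def by simp
  qed
  have adj: "mat_adjoint (map_mat complex_of_real A) = map_mat complex_of_real (mat_adjoint A)"
    if A: "A \<in> carrier_mat n m" for A :: "real mat" and n m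
  proof -
    have A': "map_mat complex_of_real A \<in> carrier_mat n m" using A by simp
    show ?thesis
    proof (rule eq_matI)
      fix i j assume "i < dim_row (map_mat complex_of_real (mat_adjoint A))" "j < dim_col (map_mat complex_of_real (mat_adjoint A))"
      then have i: "i < m" and j: "j < n" using adj_carrier[OF A] by auto
      show "mat_adjoint (map_mat complex_of_real A) $$ (i, j) = map_mat complex_of_real (mat_adjoint A) $$ (i, j)"
        using adj_index[OF A' i j] adj_index[OF A i j] adj_carrier[OF A] i j A by simp
    qed (use adj_carrier[OF A] adj_carrier[OF A'] in simp_all)
  qed
  have cvm: "cv (map_mat complex_of_real A) = cv A" if A: "A \<in> carrier_mat n m" for A :: "real mat" and n m
  proof -
    have "map_mat complex_of_real A * mat_adjoint (map_mat complex_of_real A) = map_mat complex_of_real (A * mat_adjoint A)"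
      unfolding adj[OF A] by (rule of_real_hom.mat_hom_mult[OF A adj_carrier[OF A], symmetric])
    then show ?thesis unfolding cv_def by simp
  qed
  show cvK: "cv (cols_sub \<Psi> K) = cv (cols_sub \<Phi> K)" if K: "K \<subseteq> {..<M}" for K
  proof -
    have "cols_sub \<Psi> K = map_mat complex_of_real (cols_sub \<Phi> K)"
      unfolding cols_sub_eq[OF P K] cols_sub_eq[OF \<Phi> K] unfolding \<Psi>_def
    proof (rule eq_matI)
      fix i j assume "i < dim_row (map_mat complex_of_real (mat N (card K) (\<lambda>(i, j). \<Phi> $$ (i, pick K j))))"
        "j < dim_col (map_mat complex_of_real (mat N (card K) (\<lambda>(i, j). \<Phi> $$ (i, pick K j))))"
      then have i: "i < N" and j: "j < card K" by auto
      have "pick K j \<in> K" using pick_in_set_le[OF j] .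
      then have "pick K j < M" using K by auto
      then show "mat N (card K) (\<lambda>(i, j). map_mat complex_of_real \<Phi> $$ (i, pick K j)) $$ (i, j) =
          map_mat complex_of_real (mat N (card K) (\<lambda>(i, j). \<Phi> $$ (i, pick K j))) $$ (i, j)"
        using i j \<Phi> by simp
    qed auto
    then show ?thesis using cvm[OF cols_sub_carrier[OF \<Phi> K]] by simp
  qed
  show "CV k \<Psi> = CV k \<Phi>" unfolding CV_def using P \<Phi> cvK by (simp add: \<Psi>_def)
  have "\<Psi> * mat_adjoint \<Psi> = map_mat complex_of_real (\<Phi> * mat_adjoint \<Phi>)"
    unfolding \<Psi>_def adj[OF \<Phi>] by (rule of_real_hom.mat_hom_mult[OF \<Phi> adj_carrier[OF \<Phi>], symmetric])
  then show "\<Psi> * mat_adjoint \<Psi> = 1\<^sub>m N \<longleftrightarrow> \<Phi> * mat_adjoint \<Phi> = 1\<^sub>m N"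
    using of_real_hom.mat_hom_inj[of "\<Phi> * mat_adjoint \<Phi>" "1\<^sub>m N"] of_real_hom.mat_hom_one[of N]
    by (metis)
qed

theorem proposition19:
  shows
  "(\<forall>(\<Phi>::real mat) N M k.
      \<Phi> \<in> carrier_mat N M \<longrightarrow>
      (\<forall>i<M. vnorm (col \<Phi> i) = sqrt (real N / real M)) \<longrightarrow>
      N \<le> k \<longrightarrow> k \<le> M \<longrightarrow>
      CV k \<Phi> \<le> sqrt (real (M choose k) * real ((M - N) choose (M - k))) \<and>
      (CV k \<Phi> = sqrt (real (M choose k) * real ((M - N) choose (M - k))) \<longleftrightarrow>
         \<Phi> * mat_adjoint \<Phi> = 1\<^sub>m N \<and>
         (\<forall>K. K \<subseteq> {..<M} \<and> card K = k \<longrightarrow>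
            cv (cols_sub \<Phi> K) = sqrt (inverse (real (M choose k)) * real ((M - N) choose (M - k))))))
   \<and>
   (\<forall>(\<Phi>::complex mat) N M k.
      \<Phi> \<in> carrier_mat N M \<longrightarrow>
      (\<forall>i<M. vnorm (col \<Phi> i) = sqrt (real N / real M)) \<longrightarrow>
      N \<le> k \<longrightarrow> k \<le> M \<longrightarrow>
      CV k \<Phi> \<le> sqrt (real (M choose k) * real ((M - N) choose (M - k))) \<and>
      (CV k \<Phi> = sqrt (real (M choose k) * real ((M - N) choose (M - k))) \<longleftrightarrow>
         \<Phi> * mat_adjoint \<Phi> = 1\<^sub>m N \<and>
         (\<forall>K. K \<subseteq> {..<M} \<and> card K = k \<longrightarrow>
            cv (cols_sub \<Phi> K) = sqrt (inverse (real (M choose k)) * real ((M - N) choose (M - k))))))"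
proof (intro conjI allI impI)
  fix \<Phi> :: "real mat" and N M k
  assume \<Phi>: "\<Phi> \<in> carrier_mat N M" and nrm: "\<forall>i<M. vnorm (col \<Phi> i) = sqrt (real N / real M)"
    and Nk: "N \<le> k" and kM: "k \<le> M"
  note T = real_transfer[OF \<Phi>]
  have nrm': "\<forall>i<M. vnorm (col (map_mat complex_of_real \<Phi>) i) = sqrt (real N / real M)"
    using nrm T(2) by simp
  note mc = main_complex[OF T(1) nrm' Nk kM]
  have eqK: "(\<forall>K. K \<subseteq> {..<M} \<and> card K = k \<longrightarrow> cv (cols_sub (map_mat complex_of_real \<Phi>) K) = c) \<longleftrightarrow>
     (\<forall>K. K \<subseteq> {..<M} \<and> card K = k \<longrightarrow> cv (cols_sub \<Phi> K) = c)" for c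
    using T(3) by auto
  show "CV k \<Phi> \<le> sqrt (real (M choose k) * real ((M - N) choose (M - k)))"
    using mc T(4) by simp
  show "(CV k \<Phi> = sqrt (real (M choose k) * real ((M - N) choose (M - k)))) =
    (\<Phi> * mat_adjoint \<Phi> = 1\<^sub>m N \<and>
     (\<forall>K. K \<subseteq> {..<M} \<and> card K = k \<longrightarrow>
        cv (cols_sub \<Phi> K) = sqrt (inverse (real (M choose k)) * real ((M - N) choose (M - k)))))"
    using mc unfolding T(4) T(5) eqK by simp
next
  fix \<Phi> :: "complex mat" and N M k
  assume \<Phi>: "\<Phi> \<in> carrier_mat N M" and nrm: "\<forall>i<M. vnorm (col \<Phi> i) = sqrt (real N / real M)"
    and Nk: "N \<le> k" and kM: "k \<le> M"
  note mc = main_complex[OF \<Phi> nrm Nk kM]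
  show "CV k \<Phi> \<le> sqrt (real (M choose k) * real ((M - N) choose (M - k)))"
    using mc by simp
  show "(CV k \<Phi> = sqrt (real (M choose k) * real ((M - N) choose (M - k)))) =
    (\<Phi> * mat_adjoint \<Phi> = 1\<^sub>m N \<and>
     (\<forall>K. K \<subseteq> {..<M} \<and> card K = k \<longrightarrow>
        cv (cols_sub \<Phi> K) = sqrt (inverse (real (M choose k)) * real ((M - N) choose (M - k)))))"
    using mc by simp
qed

end
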